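(* Let $\lambda^\pm>0$, $\mu^\pm>0$, $\hat\lambda=\lambda^+-\lambda^-$, $\hat\mu=\mu^+-\mu^-$, and let $g_n,g_t\in\mathbb R$ satisfy $g_n\in[0,1]$, $(1-g_n)^2-g_t^2\ge0$ and $g_n^2-g_t^2\ge0$. Then the matrix $$\Xi=\begin{bmatrix}\lambda^-+2\mu^-&0\\0&\mu^-\end{bmatrix}+\begin{bmatrix}(\hat\lambda+2\hat\mu)g_n&\hat\lambda g_t\\ \hat\mu g_t&\hat\mu g_n\end{bmatrix}$$ satisfies $\det\Xi>2\big(\min\{\mu^+,\mu^-\}\big)^2$.
   Context: In the paper $g_n=g_n(F_0)$, $g_t=g_t(F_0)$ are the values at a specially chosen point $F_0$ of the auxiliary functions $g_n(X)=\sum_{i\in\mathcal I^-}L(A_i)\nabla\psi_i(X)\cdot\bar{\mathbf n}$, $g_t(X)=\sum_{i\in\mathcal I^-}L(A_i)\nabla\psi_i(X)\cdot\bar{\mathbf t}$ on a rectangular interface element; the statement above is the algebraic content, with the inequalities on $g_n,g_t$ as hypotheses. *)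

theory Defs
  imports "HOL-Analysis.Analysis"
begin

end

theory Submission
  imports Defs
begin

theorem mainTheorem10:
  fixes lp lm mp mm gn gt :: real
  assumes "lp > 0" and "lm > 0" and "mp > 0" and "mm > 0"
    and "0 \<le> gn" and "gn \<le> 1"
    and "(1 - gn)^2 - gt^2 \<ge> 0"
    and "gn^2 - gt^2 \<ge> 0"
  shows "det ((vector [vector [lm + 2*mm, 0], vector [0, mm]] :: real^2^2)
             + vector [vector [((lp - lm) + 2*(mp - mm)) * gn, (lp - lm) * gt],
                       vector [(mp - mm) * gt, (mp - mm) * gn]])
         > 2 * (min mp mm)^2"
proof -
  define a where "a = 1 - gn"
  define b where "b = gn"
  have a0: "a \<ge> 0" and b0: "b \<ge> 0" and ab: "a + b = 1" using assms by (auto simp: a_def b_def)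
  have ha: "a^2 - gt^2 \<ge> 0" and hb: "b^2 - gt^2 \<ge> 0" using assms by (auto simp: a_def b_def)
  have det: "det ((vector [vector [lm + 2*mm, 0], vector [0, mm]] :: real^2^2)
             + vector [vector [((lp - lm) + 2*(mp - mm)) * gn, (lp - lm) * gt],
                       vector [(mp - mm) * gt, (mp - mm) * gn]])
      = 2*(mm*a + mp*b)^2 + (lm*mm*(a^2-gt^2) + lp*mp*(b^2-gt^2) + (lm*mp+lp*mm)*(a*b+gt^2))" (is "?L = ?R")
  proof -
    have "?L = (lm + 2*mm + ((lp - lm) + 2*(mp - mm)) * gn) * (mm + (mp - mm) * gn) - (lp - lm) * gt * ((mp - mm) * gt)"
      by (simp add: det_2 vector_2)
    also have "\<dots> = ?R" unfolding a_def b_def by algebra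
    finally show ?thesis .
  qed
  have E: "lm*mm*(a^2-gt^2) + lp*mp*(b^2-gt^2) + (lm*mp+lp*mm)*(a*b+gt^2) > 0"
  proof -
    have t1: "lm*mm*(a^2-gt^2) \<ge> 0" using ha assms by simp
    have t2: "lp*mp*(b^2-gt^2) \<ge> 0" using hb assms by simp
    have t3: "(lm*mp+lp*mm)*(a*b+gt^2) \<ge> 0" using a0 b0 assms by (simp add: add_pos_pos)
    show ?thesis
    proof (cases "a*b + gt^2 > 0")
      case True
      have "(lm*mp+lp*mm) > 0" using assms by (simp add: add_pos_pos)
      then have "(lm*mp+lp*mm)*(a*b+gt^2) > 0" using True by simp
      then show ?thesis using t1 t2 by linarith
    next
      case False
      then have "a*b = 0" "gt = 0" using a0 b0
      proof -
        have p: "a*b \<ge> 0" using a0 b0 by simp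
        have q: "gt^2 \<ge> 0" by simp
        have "a*b = 0" "gt^2 = 0" using p q False by linarith+
        then show "a*b = 0" "gt = 0" by auto
      qed
      then have "a = 0 \<and> b = 1 \<or> a = 1 \<and> b = 0" using ab by auto
      then show ?thesis using t3 \<open>gt = 0\<close> assms by auto
    qed
  qed
  have m: "mm*a + mp*b \<ge> min mp mm" using a0 b0 ab
  proof -
    have "mm*a \<ge> min mp mm * a" using a0 by (simp add: mult_right_mono)
    moreover have "mp*b \<ge> min mp mm * b" using b0 by (simp add: mult_right_mono)
    ultimately show ?thesis using ab by (metis add_mono distrib_left mult.commute mult_1_right)
  qed
  have "min mp mm \<ge> 0" using assms by simp
  then have "(min mp mm)^2 \<le> (mm*a + mp*b)^2" using m by (simp add: power_mono)
  then show ?thesis unfolding det using E by linarith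
qed

end
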